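(* Let $S=(X,X_0,X_S,U,\rightarrow,Y,H)$ be a finite metric system with metric $\mathbf{d}$ on $Y$, let $\delta\geq 0$, and let $S_I=(X_I,X_{I0},U,\rightarrow_I)$ and $S_C=(X_C,X_{C0},U,\rightarrow_C)$ be its $\delta$-approximate initial-state estimator and $\delta$-approximate current-state estimator. Then $S$ is $\delta$-approximate infinite-step opaque if and only if for all $(x,q)\in X_I$ and $(x',q')\in X_C$: $x=x'\in X_S$ implies $q\cap q'\not\subseteq X_S$.
   Context: A system is a tuple $S=(X,X_0,X_S,U,\rightarrow,Y,H)$ with state set $X$, initial states $X_0\subseteq X$, secret states $X_S\subseteq X$, inputs $U$, transition relation $\rightarrow\subseteq X\times U\times X$ (write $x\xrightarrow{u}x'$), outputs $Y$, output map $H:X\to Y$; metric if $Y$ has a metric $\mathbf{d}$, finite if $X,U$ are finite. $S$ is $\delta$-approximate infinite-step opaque if for every $x_0\in X_0$, every finite run $x_0\xrightarrow{u_1}x_1\cdots\xrightarrow{u_n}x_n$ and every $k\in\{0,\dots,n\}$ with $x_k\in X_S$, there exist $x_0'\in X_0$ and a finite run $x_0'\xrightarrow{u_1'}x_1'\cdots\xrightarrow{u_n'}x_n'$ (inputs arbitrary) with $x_k'\in X\setminus X_S$ and $\max_{0\le i\le n}\mathbf{d}(H(x_i),H(x_i'))\leq\delta$. Let $\mathbf{Pre}_u(x)=\{x'':x''\xrightarrow{u}x\}$, $\mathbf{Post}_u(x)=\{x':x\xrightarrow{u}x'\}$, extended to sets by union. $S_I$: initial states $X_{I0}=\{(x,q)\in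 X\times 2^X: q=\{x'\in X:\mathbf{d}(H(x),H(x'))\leq\delta\}\}$; $(x,q)\xrightarrow{u}_I(x',q')$ iff $(x',u,x)\in\rightarrow$ and $q'=\bigcup_{\hat u\in U}\mathbf{Pre}_{\hat u}(q)\cap\{x''\in X:\mathbf{d}(H(x'),H(x''))\leq\delta\}$; $X_I$ = states reachable from $X_{I0}$. $S_C$: initial states $X_{C0}=\{(x,q)\in X_0\times 2^{X_0}: q=\{x'\in X_0:\mathbf{d}(H(x),H(x'))\leq\delta\}\}$; $(x,q)\xrightarrow{u}_C(x',q')$ iff $(x,u,x')\in\rightarrow$ and $q'=\bigcup_{\hat u\in U}\mathbf{Post}_{\hat u}(q)\cap\{x''\in X:\mathbf{d}(H(x'),H(x''))\leq\delta\}$; $X_C$ = states reachable from $X_{C0}$. *)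

theory Defs
  imports "HOL-Analysis.Analysis"
begin

text \<open>A system S = (X, X0, XS, U, T, Y, H); the transition relation T is a set of
  triples (x, u, x'), meaning x --u--> x'.\<close>

definition is_system ::
  "'x set \<Rightarrow> 'x set \<Rightarrow> 'x set \<Rightarrow> 'u set \<Rightarrow> ('x \<times> 'u \<times> 'x) set \<Rightarrow> 'y set \<Rightarrow> ('x \<Rightarrow> 'y) \<Rightarrow> bool"
  where "is_system X X0 XS U T Y H \<longleftrightarrow>
     X0 \<subseteq> X \<and> XS \<subseteq> X \<and> T \<subseteq> X \<times> U \<times> X \<and> (\<forall>x\<in>X. H x \<in> Y)"

text \<open>Finite run of length n: states xs 0 .. xs n, inputs us 1 .. us n.\<close>
definition is_run :: "('x \<times> 'u \<times> 'x) set \<Rightarrow> nat \<Rightarrow> (nat \<Rightarrow> 'x) \<Rightarrow> (nat \<Rightarrow> 'u) \<Rightarrow> bool"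
  where "is_run T n xs us \<longleftrightarrow> (\<forall>i<n. (xs i, us (Suc i), xs (Suc i)) \<in> T)"

definition approx_inf_step_opaque ::
  "'x set \<Rightarrow> 'x set \<Rightarrow> 'x set \<Rightarrow> ('x \<times> 'u \<times> 'x) set \<Rightarrow> ('x \<Rightarrow> 'y) \<Rightarrow> ('y \<Rightarrow> 'y \<Rightarrow> real) \<Rightarrow> real \<Rightarrow> bool"
  where "approx_inf_step_opaque X X0 XS T H d \<delta> \<longleftrightarrow>
    (\<forall>n xs us k. xs 0 \<in> X0 \<and> is_run T n xs us \<and> k \<le> n \<and> xs k \<in> XS \<longrightarrow>
       (\<exists>xs' us'. xs' 0 \<in> X0 \<and> is_run T n xs' us' \<and> xs' k \<in> X - XS \<and>
          (\<forall>i\<le>n. d (H (xs i)) (H (xs' i)) \<le> \<delta>)))"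

definition Pre :: "('x \<times> 'u \<times> 'x) set \<Rightarrow> 'u \<Rightarrow> 'x set \<Rightarrow> 'x set"
  where "Pre T u A = {x''. \<exists>x\<in>A. (x'', u, x) \<in> T}"

definition Post :: "('x \<times> 'u \<times> 'x) set \<Rightarrow> 'u \<Rightarrow> 'x set \<Rightarrow> 'x set"
  where "Post T u A = {x'. \<exists>x\<in>A. (x, u, x') \<in> T}"

definition close_set :: "'x set \<Rightarrow> ('x \<Rightarrow> 'y) \<Rightarrow> ('y \<Rightarrow> 'y \<Rightarrow> real) \<Rightarrow> real \<Rightarrow> 'x \<Rightarrow> 'x set"
  where "close_set A H d \<delta> x = {x'\<in>A. d (H x) (H x') \<le> \<delta>}"

definition init_est_init :: "'x set \<Rightarrow> ('x \<Rightarrow> 'y) \<Rightarrow> ('y \<Rightarrow> 'y \<Rightarrow> real) \<Rightarrow> real \<Rightarrow> ('x \<times> 'x set) set"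
  where "init_est_init X H d \<delta> = {(x, q). x \<in> X \<and> q = close_set X H d \<delta> x}"

definition init_est_trans ::
  "'x set \<Rightarrow> 'u set \<Rightarrow> ('x \<times> 'u \<times> 'x) set \<Rightarrow> ('x \<Rightarrow> 'y) \<Rightarrow> ('y \<Rightarrow> 'y \<Rightarrow> real) \<Rightarrow> real
    \<Rightarrow> ('x \<times> 'x set) \<Rightarrow> 'u \<Rightarrow> ('x \<times> 'x set) \<Rightarrow> bool"
  where "init_est_trans X U T H d \<delta> s u s' \<longleftrightarrow>
    (case s of (x, q) \<Rightarrow> case s' of (x', q') \<Rightarrow>
       (x', u, x) \<in> T \<and> q' = (\<Union>uh\<in>U. Pre T uh q) \<inter> close_set X H d \<delta> x')"

inductive_set init_est_reach ::
  "'x set \<Rightarrow> 'u set \<Rightarrow> ('x \<times> 'u \<times> 'x) set \<Rightarrow> ('x \<Rightarrow> 'y) \<Rightarrow> ('y \<Rightarrow> 'y \<Rightarrow> real) \<Rightarrow> real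
    \<Rightarrow> ('x \<times> 'x set) set"
  for X U T H d \<delta>
  where
    init: "s \<in> init_est_init X H d \<delta> \<Longrightarrow> s \<in> init_est_reach X U T H d \<delta>"
  | step: "s \<in> init_est_reach X U T H d \<delta> \<Longrightarrow> u \<in> U \<Longrightarrow> init_est_trans X U T H d \<delta> s u s'
           \<Longrightarrow> s' \<in> init_est_reach X U T H d \<delta>"

definition cur_est_init :: "'x set \<Rightarrow> ('x \<Rightarrow> 'y) \<Rightarrow> ('y \<Rightarrow> 'y \<Rightarrow> real) \<Rightarrow> real \<Rightarrow> ('x \<times> 'x set) set"
  where "cur_est_init X0 H d \<delta> = {(x, q). x \<in> X0 \<and> q = close_set X0 H d \<delta> x}"

definition cur_est_trans ::
  "'x set \<Rightarrow> 'u set \<Rightarrow> ('x \<times> 'u \<times> 'x) set \<Rightarrow> ('x \<Rightarrow> 'y) \<Rightarrow> ('y \<Rightarrow> 'y \<Rightarrow> real) \<Rightarrow> real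
    \<Rightarrow> ('x \<times> 'x set) \<Rightarrow> 'u \<Rightarrow> ('x \<times> 'x set) \<Rightarrow> bool"
  where "cur_est_trans X U T H d \<delta> s u s' \<longleftrightarrow>
    (case s of (x, q) \<Rightarrow> case s' of (x', q') \<Rightarrow>
       (x, u, x') \<in> T \<and> q' = (\<Union>uh\<in>U. Post T uh q) \<inter> close_set X H d \<delta> x')"

inductive_set cur_est_reach ::
  "'x set \<Rightarrow> 'x set \<Rightarrow> 'u set \<Rightarrow> ('x \<times> 'u \<times> 'x) set \<Rightarrow> ('x \<Rightarrow> 'y) \<Rightarrow> ('y \<Rightarrow> 'y \<Rightarrow> real) \<Rightarrow> real
    \<Rightarrow> ('x \<times> 'x set) set"
  for X X0 U T H d \<delta>
  where
    init: "s \<in> cur_est_init X0 H d \<delta> \<Longrightarrow> s \<in> cur_est_reach X X0 U T H d \<delta>"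
  | step: "s \<in> cur_est_reach X X0 U T H d \<delta> \<Longrightarrow> u \<in> U \<Longrightarrow> cur_est_trans X U T H d \<delta> s u s'
           \<Longrightarrow> s' \<in> cur_est_reach X X0 U T H d \<delta>"

end

theory Submission
  imports Defs
begin

definition catr :: "nat \<Rightarrow> (nat \<Rightarrow> 'a) \<Rightarrow> (nat \<Rightarrow> 'a) \<Rightarrow> nat \<Rightarrow> 'a"
  where "catr k f g = (\<lambda>i. if i \<le> k then f i else g (i - k))"

lemma run_cat:
  assumes "is_run T k f u1" "is_run T p g u2" "f k = g 0"
  shows "is_run T (k + p) (catr k f g) (catr k u1 u2)"
  unfolding is_run_def
proof (intro allI impI)
  fix i assume i: "i < k + p"
  show "(catr k f g i, catr k u1 u2 (Suc i), catr k f g (Suc i)) \<in> T"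
  proof (cases "i < k")
    case True
    then show ?thesis using assms(1) unfolding is_run_def catr_def by auto
  next
    case False
    then have "i - k < p" using i by auto
    then have "(g (i-k), u2 (Suc (i-k)), g (Suc (i-k))) \<in> T" using assms(2) unfolding is_run_def by auto
    moreover have "Suc (i - k) = Suc i - k" using False by auto
    ultimately show ?thesis using False assms(3) unfolding catr_def
      by (cases "i = k") auto
  qed
qed

lemma run_restrict: "is_run T n xs us \<Longrightarrow> k \<le> n \<Longrightarrow> is_run T k xs us"
  unfolding is_run_def by auto

lemma run_shift: "is_run T n xs us \<Longrightarrow> k \<le> n \<Longrightarrow> is_run T (n - k) (\<lambda>i. xs (i + k)) (\<lambda>i. us (i + k))"
  unfolding is_run_def by (auto dest: spec[where x="_ + k"])

lemma run_in_X:
  assumes "T \<subseteq> X \<times> U \<times> X" "is_run T n xs us" "xs 0 \<in> X"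
  shows "xs n \<in> X"
proof (cases n)
  case 0 then show ?thesis using assms by simp
next
  case (Suc m)
  then have "(xs m, us (Suc m), xs (Suc m)) \<in> T" using assms(2) unfolding is_run_def by auto
  then show ?thesis using assms(1) Suc by auto
qed

definition cchar where
  "cchar X0 T H d \<delta> k xs q \<longleftrightarrow> (\<forall>w. w \<in> q \<longleftrightarrow> (\<exists>ys vs. ys 0 \<in> X0 \<and> is_run T k ys vs \<and> ys k = w \<and>
       (\<forall>i\<le>k. d (H (xs i)) (H (ys i)) \<le> \<delta>)))"

lemma cchar_step:
  assumes T: "T \<subseteq> X \<times> U \<times> X" and c: "cchar X0 T H d \<delta> k xs q"
    and xs': "\<forall>i\<le>k. xs' i = xs i" "xs' (Suc k) = x'"
  shows "cchar X0 T H d \<delta> (Suc k) xs' ((\<Union>uh\<in>U. Post T uh q) \<inter> close_set X H d \<delta> x')"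
  unfolding cchar_def
proof (intro allI iffI)
  fix w assume "w \<in> (\<Union>uh\<in>U. Post T uh q) \<inter> close_set X H d \<delta> x'"
  then obtain uh v where v: "v \<in> q" "(v, uh, w) \<in> T" and dw: "d (H x') (H w) \<le> \<delta>"
    unfolding Post_def close_set_def by auto
  from v(1) c obtain ys vs where ys: "ys 0 \<in> X0" "is_run T k ys vs" "ys k = v"
    "\<forall>i\<le>k. d (H (xs i)) (H (ys i)) \<le> \<delta>" unfolding cchar_def by blast
  let ?ys = "ys(Suc k := w)" and ?vs = "vs(Suc k := uh)"
  have "is_run T (Suc k) ?ys ?vs" using ys(2,3) v(2) unfolding is_run_def
    by (auto simp: less_Suc_eq)
  moreover have "\<forall>i\<le>Suc k. d (H (xs' i)) (H (?ys i)) \<le> \<delta>"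
    using ys(4) xs' dw by (auto simp: le_Suc_eq)
  ultimately show "\<exists>ys vs. ys 0 \<in> X0 \<and> is_run T (Suc k) ys vs \<and> ys (Suc k) = w \<and>
       (\<forall>i\<le>Suc k. d (H (xs' i)) (H (ys i)) \<le> \<delta>)" using ys(1) by (intro exI[of _ ?ys] exI[of _ ?vs]) auto
next
  fix w assume "\<exists>ys vs. ys 0 \<in> X0 \<and> is_run T (Suc k) ys vs \<and> ys (Suc k) = w \<and>
       (\<forall>i\<le>Suc k. d (H (xs' i)) (H (ys i)) \<le> \<delta>)"
  then obtain ys vs where ys: "ys 0 \<in> X0" "is_run T (Suc k) ys vs" "ys (Suc k) = w"
       "\<forall>i\<le>Suc k. d (H (xs' i)) (H (ys i)) \<le> \<delta>" by blast
  have "ys k \<in> q" using c ys xs'(1) unfolding cchar_def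
    by (metis le_SucI run_restrict le_refl)
  moreover have tr: "(ys k, vs (Suc k), w) \<in> T" using ys(2,3) unfolding is_run_def by auto
  moreover have "d (H x') (H w) \<le> \<delta>" using ys(3,4) xs'(2) by fastforce
  ultimately show "w \<in> (\<Union>uh\<in>U. Post T uh q) \<inter> close_set X H d \<delta> x'"
    using T unfolding Post_def close_set_def by blast
qed

lemma cchar_init: "cchar X0 T H d \<delta> 0 (\<lambda>_. x) (close_set X0 H d \<delta> x)"
  unfolding cchar_def close_set_def is_run_def
  by (auto intro!: exI[of _ "\<lambda>_. _"])

lemma cur_char:
  assumes T: "T \<subseteq> X \<times> U \<times> X"
  shows "s \<in> cur_est_reach X X0 U T H d \<delta> \<Longrightarrow> \<exists>k xs us. xs 0 \<in> X0 \<and> is_run T k xs us \<and> xs k = fst s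
     \<and> cchar X0 T H d \<delta> k xs (snd s)"
proof (induction rule: cur_est_reach.induct)
  case (init s)
  then obtain x where s: "s = (x, close_set X0 H d \<delta> x)" "x \<in> X0" unfolding cur_est_init_def by auto
  show ?case using s cchar_init[of X0 T H d \<delta> x]
    by (intro exI[of _ 0] exI[of _ "\<lambda>_. x"]) (auto simp: is_run_def)
next
  case (step s u s')
  then obtain k xs us where IH: "xs 0 \<in> X0" "is_run T k xs us" "xs k = fst s" "cchar X0 T H d \<delta> k xs (snd s)"
    by blast
  obtain x q x' q' where ss: "s = (x, q)" "s' = (x', q')" by (cases s, cases s')
  have tr: "(x, u, x') \<in> T" and q': "q' = (\<Union>uh\<in>U. Post T uh q) \<inter> close_set X H d \<delta> x'"
    using step.hyps(3) ss unfolding cur_est_trans_def by auto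
  let ?xs = "xs(Suc k := x')" and ?us = "us(Suc k := u)"
  have "is_run T (Suc k) ?xs ?us" using IH(2,3) tr ss unfolding is_run_def by (auto simp: less_Suc_eq)
  have cq: "cchar X0 T H d \<delta> k xs q" using IH(4) ss by simp
  have "cchar X0 T H d \<delta> (Suc k) ?xs q'" unfolding q'
    by (rule cchar_step[OF T cq]) auto
  moreover note \<open>is_run T (Suc k) ?xs ?us\<close>
  moreover have "?xs 0 \<in> X0" using IH(1) by simp
  moreover have "?xs (Suc k) = fst s'" "snd s' = q'" using ss by simp_all
  ultimately show ?case by metis
qed

lemma cur_complete:
  assumes T: "T \<subseteq> X \<times> U \<times> X"
  shows "xs 0 \<in> X0 \<Longrightarrow> is_run T k xs us \<Longrightarrow> \<exists>q. (xs k, q) \<in> cur_est_reach X X0 U T H d \<delta> \<and> cchar X0 T H d \<delta> k xs q"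
proof (induction k)
  case 0
  have "(xs 0, close_set X0 H d \<delta> (xs 0)) \<in> cur_est_reach X X0 U T H d \<delta>"
    using 0 by (intro cur_est_reach.init) (auto simp: cur_est_init_def)
  moreover have "cchar X0 T H d \<delta> 0 xs (close_set X0 H d \<delta> (xs 0))"
    using cchar_init[of X0 T H d \<delta> "xs 0"] unfolding cchar_def by auto
  ultimately show ?case by auto
next
  case (Suc k)
  then obtain q where q: "(xs k, q) \<in> cur_est_reach X X0 U T H d \<delta>" "cchar X0 T H d \<delta> k xs q"
    using run_restrict[of T "Suc k" xs us k] by auto
  have tr: "(xs k, us (Suc k), xs (Suc k)) \<in> T" using Suc.prems(2) unfolding is_run_def by auto
  let ?q = "(\<Union>uh\<in>U. Post T uh q) \<inter> close_set X H d \<delta> (xs (Suc k))"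
  have "(xs (Suc k), ?q) \<in> cur_est_reach X X0 U T H d \<delta>"
    apply (rule cur_est_reach.step[OF q(1), of "us (Suc k)"])
    using tr T apply auto[1]
    using tr unfolding cur_est_trans_def by auto
  moreover have "cchar X0 T H d \<delta> (Suc k) xs ?q" using cchar_step[OF T q(2), of xs] by auto
  ultimately show ?case by blast
qed

definition ichar where
  "ichar X T H d \<delta> p xs q \<longleftrightarrow> (\<forall>w. w \<in> q \<longleftrightarrow> (\<exists>ys vs. is_run T p ys vs \<and> ys 0 = w \<and> ys p \<in> X \<and>
       (\<forall>i\<le>p. d (H (xs i)) (H (ys i)) \<le> \<delta>)))"

lemma ichar_step:
  assumes T: "T \<subseteq> X \<times> U \<times> X" and c: "ichar X T H d \<delta> p xs q"
    and xs': "\<forall>i. xs' (Suc i) = xs i" "xs' 0 = z'"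
  shows "ichar X T H d \<delta> (Suc p) xs' ((\<Union>uh\<in>U. Pre T uh q) \<inter> close_set X H d \<delta> z')"
  unfolding ichar_def
proof (intro allI iffI)
  fix w assume "w \<in> (\<Union>uh\<in>U. Pre T uh q) \<inter> close_set X H d \<delta> z'"
  then obtain uh v where v: "v \<in> q" "(w, uh, v) \<in> T" and dw: "d (H z') (H w) \<le> \<delta>"
    unfolding Pre_def close_set_def by auto
  from v(1) c obtain ys vs where ys: "is_run T p ys vs" "ys 0 = v" "ys p \<in> X"
    "\<forall>i\<le>p. d (H (xs i)) (H (ys i)) \<le> \<delta>" unfolding ichar_def by blast
  define ys' where "ys' = (\<lambda>i. case i of 0 \<Rightarrow> w | Suc j \<Rightarrow> ys j)"
  define vs' where "vs' = (\<lambda>i. if i = 1 then uh else vs (i - 1))"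
  have "is_run T (Suc p) ys' vs'" unfolding is_run_def
  proof (intro allI impI)
    fix i assume "i < Suc p"
    show "(ys' i, vs' (Suc i), ys' (Suc i)) \<in> T"
    proof (cases i)
      case 0 then show ?thesis using v ys(2) by (simp add: ys'_def vs'_def)
    next
      case (Suc j) then show ?thesis using ys(1) \<open>i < Suc p\<close> unfolding is_run_def
        by (simp add: ys'_def vs'_def)
    qed
  qed
  moreover have "\<forall>i\<le>Suc p. d (H (xs' i)) (H (ys' i)) \<le> \<delta>"
  proof (intro allI impI)
    fix i assume "i \<le> Suc p" then show "d (H (xs' i)) (H (ys' i)) \<le> \<delta>"
      using ys(4) xs' dw by (cases i) (auto simp: ys'_def)
  qed
  ultimately show "\<exists>ys vs. is_run T (Suc p) ys vs \<and> ys 0 = w \<and> ys (Suc p) \<in> X \<and>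
       (\<forall>i\<le>Suc p. d (H (xs' i)) (H (ys i)) \<le> \<delta>)" using ys(3)
    by (intro exI[of _ ys'] exI[of _ vs']) (auto simp: ys'_def)
next
  fix w assume "\<exists>ys vs. is_run T (Suc p) ys vs \<and> ys 0 = w \<and> ys (Suc p) \<in> X \<and>
       (\<forall>i\<le>Suc p. d (H (xs' i)) (H (ys i)) \<le> \<delta>)"
  then obtain ys vs where ys: "is_run T (Suc p) ys vs" "ys 0 = w" "ys (Suc p) \<in> X"
       "\<forall>i\<le>Suc p. d (H (xs' i)) (H (ys i)) \<le> \<delta>" by blast
  have "is_run T p (\<lambda>i. ys (i + 1)) (\<lambda>i. vs (i + 1))" using run_shift[OF ys(1), of 1] by simp
  moreover have "\<forall>i\<le>p. d (H (xs i)) (H (ys (i + 1))) \<le> \<delta>"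
  proof (intro allI impI)
    fix i assume "i \<le> p"
    then have "d (H (xs' (Suc i))) (H (ys (Suc i))) \<le> \<delta>" using ys(4) by simp
    then show "d (H (xs i)) (H (ys (i + 1))) \<le> \<delta>" using xs'(1) by simp
  qed
  moreover have "(\<lambda>i. ys (i + 1)) 0 = ys 1" "(\<lambda>i. ys (i + 1)) p \<in> X" using ys(3) by simp_all
  ultimately have ex: "\<exists>zs ws. is_run T p zs ws \<and> zs 0 = ys 1 \<and> zs p \<in> X \<and>
       (\<forall>i\<le>p. d (H (xs i)) (H (zs i)) \<le> \<delta>)" by blast
  have "ys 1 \<in> q" using c ex unfolding ichar_def by blast
  moreover have tr: "(w, vs 1, ys 1) \<in> T" using ys(1,2) unfolding is_run_def by auto
  moreover have "d (H z') (H w) \<le> \<delta>" using ys(2,4) xs'(2) by fastforce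
  ultimately show "w \<in> (\<Union>uh\<in>U. Pre T uh q) \<inter> close_set X H d \<delta> z'"
    using T unfolding Pre_def close_set_def by blast
qed

lemma ichar_init: "ichar X T H d \<delta> 0 (\<lambda>_. x) (close_set X H d \<delta> x)"
  unfolding ichar_def close_set_def is_run_def
  by (auto intro!: exI[of _ "\<lambda>_. _"])

lemma init_char:
  assumes T: "T \<subseteq> X \<times> U \<times> X"
  shows "s \<in> init_est_reach X U T H d \<delta> \<Longrightarrow> \<exists>p xs us. is_run T p xs us \<and> xs 0 = fst s \<and> xs p \<in> X
     \<and> ichar X T H d \<delta> p xs (snd s)"
proof (induction rule: init_est_reach.induct)
  case (init s)
  then obtain x where s: "s = (x, close_set X H d \<delta> x)" "x \<in> X" unfolding init_est_init_def by auto
  show ?case using s ichar_init[of X T H d \<delta> x]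
    by (intro exI[of _ 0] exI[of _ "\<lambda>_. x"]) (auto simp: is_run_def)
next
  case (step s u s')
  then obtain p xs us where IH: "is_run T p xs us" "xs 0 = fst s" "xs p \<in> X" "ichar X T H d \<delta> p xs (snd s)"
    by blast
  obtain x q x' q' where ss: "s = (x, q)" "s' = (x', q')" by (cases s, cases s')
  have tr: "(x', u, x) \<in> T" and q': "q' = (\<Union>uh\<in>U. Pre T uh q) \<inter> close_set X H d \<delta> x'"
    using step.hyps(3) ss unfolding init_est_trans_def by auto
  define xs' where "xs' = (\<lambda>i. case i of 0 \<Rightarrow> x' | Suc j \<Rightarrow> xs j)"
  define us' where "us' = (\<lambda>i. if i = 1 then u else us (i - 1))"
  have "is_run T (Suc p) xs' us'" unfolding is_run_def
  proof (intro allI impI)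
    fix i assume "i < Suc p"
    show "(xs' i, us' (Suc i), xs' (Suc i)) \<in> T"
    proof (cases i)
      case 0 then show ?thesis using tr IH(2) ss by (simp add: xs'_def us'_def)
    next
      case (Suc j) then show ?thesis using IH(1) \<open>i < Suc p\<close> unfolding is_run_def
        by (simp add: xs'_def us'_def)
    qed
  qed
  have iq: "ichar X T H d \<delta> p xs q" using IH(4) ss by simp
  have "ichar X T H d \<delta> (Suc p) xs' q'" unfolding q'
    by (rule ichar_step[OF T iq]) (auto simp: xs'_def)
  moreover note \<open>is_run T (Suc p) xs' us'\<close>
  moreover have "xs' (Suc p) \<in> X" using IH(3) by (simp add: xs'_def)
  moreover have "xs' 0 = fst s'" "snd s' = q'" using ss by (simp_all add: xs'_def)
  ultimately show ?case by metis
qed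

lemma init_complete:
  assumes T: "T \<subseteq> X \<times> U \<times> X"
  shows "is_run T p xs us \<Longrightarrow> xs p \<in> X \<Longrightarrow> \<exists>q. (xs 0, q) \<in> init_est_reach X U T H d \<delta> \<and> ichar X T H d \<delta> p xs q"
proof (induction p arbitrary: xs us)
  case 0
  have "(xs 0, close_set X H d \<delta> (xs 0)) \<in> init_est_reach X U T H d \<delta>"
    using 0 by (intro init_est_reach.init) (auto simp: init_est_init_def)
  moreover have "ichar X T H d \<delta> 0 xs (close_set X H d \<delta> (xs 0))"
    using ichar_init[of X T H d \<delta> "xs 0"] unfolding ichar_def by auto
  ultimately show ?case by auto
next
  case (Suc p)
  have "is_run T p (\<lambda>i. xs (i + 1)) (\<lambda>i. us (i + 1))" using run_shift[OF Suc.prems(1), of 1] by simp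
  then obtain q where q: "(xs 1, q) \<in> init_est_reach X U T H d \<delta>" "ichar X T H d \<delta> p (\<lambda>i. xs (i + 1)) q"
    using Suc.IH[of "\<lambda>i. xs (i + 1)"] Suc.prems(2) by auto
  have tr: "(xs 0, us 1, xs 1) \<in> T" using Suc.prems(1) unfolding is_run_def by auto
  let ?q = "(\<Union>uh\<in>U. Pre T uh q) \<inter> close_set X H d \<delta> (xs 0)"
  have "(xs 0, ?q) \<in> init_est_reach X U T H d \<delta>"
    apply (rule init_est_reach.step[OF q(1), of "us 1"])
    using tr T apply auto[1]
    using tr unfolding init_est_trans_def by auto
  moreover have "ichar X T H d \<delta> (Suc p) xs ?q" using ichar_step[OF T q(2), of xs] by auto
  ultimately show ?case by blast
qed

theorem mainTheorem4:
  fixes X X0 XS :: "'x set" and U :: "'u set" and T :: "('x \<times> 'u \<times> 'x) set"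
    and Y :: "'y set" and H :: "'x \<Rightarrow> 'y" and d :: "'y \<Rightarrow> 'y \<Rightarrow> real" and \<delta> :: real
  assumes "is_system X X0 XS U T Y H"
    and "finite X" and "finite U"
    and "Metric_space Y d"
    and "\<delta> \<ge> 0"
  shows "approx_inf_step_opaque X X0 XS T H d \<delta> \<longleftrightarrow>
    (\<forall>x q x' q'. (x, q) \<in> init_est_reach X U T H d \<delta> \<longrightarrow> (x', q') \<in> cur_est_reach X X0 U T H d \<delta> \<longrightarrow>
       x = x' \<longrightarrow> x \<in> XS \<longrightarrow> \<not> (q \<inter> q' \<subseteq> XS))"
proof -
  have T: "T \<subseteq> X \<times> U \<times> X" and X0: "X0 \<subseteq> X" using assms(1) unfolding is_system_def by auto
  show ?thesis
  proof
    assume op: "approx_inf_step_opaque X X0 XS T H d \<delta>"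
    show "\<forall>x q x' q'. (x, q) \<in> init_est_reach X U T H d \<delta> \<longrightarrow> (x', q') \<in> cur_est_reach X X0 U T H d \<delta> \<longrightarrow>
       x = x' \<longrightarrow> x \<in> XS \<longrightarrow> \<not> (q \<inter> q' \<subseteq> XS)"
    proof (intro allI impI notI)
      fix x q x' q'
      assume I: "(x, q) \<in> init_est_reach X U T H d \<delta>" and C: "(x', q') \<in> cur_est_reach X X0 U T H d \<delta>"
        and e: "x = x'" and xS: "x \<in> XS" and sub: "q \<inter> q' \<subseteq> XS"
      obtain k xs1 us1 where c: "xs1 0 \<in> X0" "is_run T k xs1 us1" "xs1 k = x'" "cchar X0 T H d \<delta> k xs1 q'"
        using cur_char[OF T C] by auto
      obtain p xs2 us2 where i: "is_run T p xs2 us2" "xs2 0 = x" "xs2 p \<in> X" "ichar X T H d \<delta> p xs2 q"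
        using init_char[OF T I] by auto
      let ?xs = "catr k xs1 xs2" and ?us = "catr k us1 us2"
      have run: "is_run T (k + p) ?xs ?us" using run_cat[OF c(2) i(1)] c(3) i(2) e by simp
      have "?xs 0 \<in> X0" using c(1) by (simp add: catr_def)
      moreover have "?xs k \<in> XS" using c(3) e xS by (simp add: catr_def)
      ultimately obtain xs' us' where o: "xs' 0 \<in> X0" "is_run T (k + p) xs' us'" "xs' k \<in> X - XS"
        "\<forall>i\<le>k + p. d (H (?xs i)) (H (xs' i)) \<le> \<delta>"
        using op[unfolded approx_inf_step_opaque_def, rule_format, of ?xs "k + p" ?us k] run by auto
      have r1: "is_run T k xs' us'" using run_restrict[OF o(2)] by simp
      have d1: "\<forall>i\<le>k. d (H (xs1 i)) (H (xs' i)) \<le> \<delta>"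
      proof (intro allI impI)
        fix i assume ik: "i \<le> k"
        then have "d (H (?xs i)) (H (xs' i)) \<le> \<delta>" using o(4) by simp
        then show "d (H (xs1 i)) (H (xs' i)) \<le> \<delta>" using ik by (simp add: catr_def)
      qed
      have "\<exists>ys vs. ys 0 \<in> X0 \<and> is_run T k ys vs \<and> ys k = xs' k \<and>
          (\<forall>i\<le>k. d (H (xs1 i)) (H (ys i)) \<le> \<delta>)" using o(1) r1 d1 by blast
      then have "xs' k \<in> q'" using c(4) unfolding cchar_def by blast
      moreover
      have r2: "is_run T p (\<lambda>i. xs' (i + k)) (\<lambda>i. us' (i + k))" using run_shift[OF o(2), of k] by simp
      have x2: "(\<lambda>i. xs' (i + k)) p \<in> X" using run_in_X[OF T o(2)] o(1) X0 by (auto simp: add.commute)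
      have d2: "\<forall>i\<le>p. d (H (xs2 i)) (H (xs' (i + k))) \<le> \<delta>"
      proof (intro allI impI)
        fix i assume "i \<le> p"
        then have "d (H (?xs (i + k))) (H (xs' (i + k))) \<le> \<delta>" using o(4) by auto
        then show "d (H (xs2 i)) (H (xs' (i + k))) \<le> \<delta>" using c(3) i(2) e
          by (cases i) (auto simp: catr_def)
      qed
      have "\<exists>ys vs. is_run T p ys vs \<and> ys 0 = xs' k \<and> ys p \<in> X \<and>
          (\<forall>i\<le>p. d (H (xs2 i)) (H (ys i)) \<le> \<delta>)"
        using r2 x2 d2 by (intro exI[of _ "\<lambda>i. xs' (i + k)"] exI[of _ "\<lambda>i. us' (i + k)"]) simp
      then have "xs' k \<in> q" using i(4) unfolding ichar_def by blast
      ultimately show False using sub o(3) by auto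
    qed
  next
    assume R: "\<forall>x q x' q'. (x, q) \<in> init_est_reach X U T H d \<delta> \<longrightarrow> (x', q') \<in> cur_est_reach X X0 U T H d \<delta> \<longrightarrow>
       x = x' \<longrightarrow> x \<in> XS \<longrightarrow> \<not> (q \<inter> q' \<subseteq> XS)"
    show "approx_inf_step_opaque X X0 XS T H d \<delta>" unfolding approx_inf_step_opaque_def
    proof (intro allI impI, elim conjE)
      fix n xs us k
      assume x0: "xs 0 \<in> X0" and run: "is_run T n xs us" and kn: "k \<le> n" and xk: "xs k \<in> XS"
      obtain q' where C: "(xs k, q') \<in> cur_est_reach X X0 U T H d \<delta>" "cchar X0 T H d \<delta> k xs q'"
        using cur_complete[OF T x0 run_restrict[OF run kn], where H=H and d=d and \<delta>=\<delta>] by blast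
      have r2: "is_run T (n - k) (\<lambda>i. xs (i + k)) (\<lambda>i. us (i + k))" using run_shift[OF run kn] .
      have "xs n \<in> X" using run_in_X[OF T run] x0 X0 by auto
      then obtain q where I: "(xs k, q) \<in> init_est_reach X U T H d \<delta>" "ichar X T H d \<delta> (n - k) (\<lambda>i. xs (i + k)) q"
        using init_complete[OF T r2, where H=H and d=d and \<delta>=\<delta>] kn by auto
      from R I(1) C(1) xk obtain w where w: "w \<in> q" "w \<in> q'" "w \<notin> XS" by blast
      obtain ys1 vs1 where y1: "ys1 0 \<in> X0" "is_run T k ys1 vs1" "ys1 k = w"
        "\<forall>i\<le>k. d (H (xs i)) (H (ys1 i)) \<le> \<delta>" using C(2) w(2) unfolding cchar_def by blast
      obtain ys2 vs2 where y2: "is_run T (n - k) ys2 vs2" "ys2 0 = w" "ys2 (n - k) \<in> X"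
        "\<forall>i\<le>n - k. d (H (xs (i + k))) (H (ys2 i)) \<le> \<delta>" using I(2) w(1) unfolding ichar_def by blast
      let ?ys = "catr k ys1 ys2" and ?vs = "catr k vs1 vs2"
      have "is_run T (k + (n - k)) ?ys ?vs" using run_cat[OF y1(2) y2(1)] y1(3) y2(2) by simp
      then have "is_run T n ?ys ?vs" using kn by simp
      moreover have "?ys 0 \<in> X0" using y1(1) by (simp add: catr_def)
      moreover have "?ys k \<in> X - XS" using y1 w(3) run_in_X[OF T y1(2)] X0 by (auto simp: catr_def)
      moreover have "\<forall>i\<le>n. d (H (xs i)) (H (?ys i)) \<le> \<delta>"
      proof (intro allI impI)
        fix i assume "i \<le> n"
        show "d (H (xs i)) (H (?ys i)) \<le> \<delta>"
        proof (cases "i \<le> k")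
          case True then show ?thesis using y1(4) by (simp add: catr_def)
        next
          case False
          then have "i - k \<le> n - k" using \<open>i \<le> n\<close> by simp
          then have "d (H (xs (i - k + k))) (H (ys2 (i - k))) \<le> \<delta>" using y2(4) by blast
          then show ?thesis using False by (simp add: catr_def)
        qed
      qed
      ultimately show "\<exists>xs' us'. xs' 0 \<in> X0 \<and> is_run T n xs' us' \<and> xs' k \<in> X - XS \<and>
          (\<forall>i\<le>n. d (H (xs i)) (H (xs' i)) \<le> \<delta>)" by blast
    qed
  qed
qed

end
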